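(* Let $(V,e)$ be a unital $\ast$-normed space and $\varepsilon>1/\|e\|$. Then $\|v\|_\varepsilon=\sup\{|\langle v,\varphi\rangle|:\varphi\in S_\varepsilon\}$, where $S_\varepsilon=V_{he}^\ast\cap\varepsilon\operatorname{ball}V^\ast$, defines a norm on $V$ equivalent to the original norm of $V$.
   Context: A $\ast$-normed space is a complex vector space with involution and norm satisfying $\|v^\ast\|=\|v\|$; $V^\ast$ has involution $\langle v,\varphi^\ast\rangle=\overline{\langle v^\ast,\varphi\rangle}$, $V_h^\ast$ is the set of hermitian bounded functionals, and for nonzero hermitian $e$, $V_{he}^\ast=\{y\in V_h^\ast:\langle e,y\rangle=1\}$. $(V,e)$ is a unital $\ast$-normed space if $V_{he}^\ast\cap\operatorname{ball}V^\ast\ne\varnothing$. *)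

theory Defs
  imports "HOL-Analysis.Analysis"
begin

text \<open>We model a complex
normed space as a real normed vector space 'a together with a complex scalar
multiplication sm extending the real one and compatible with the norm.\<close>

definition complex_normed_space :: "(complex \<Rightarrow> 'a::real_normed_vector \<Rightarrow> 'a) \<Rightarrow> bool" where
  "complex_normed_space sm \<longleftrightarrow>
     (\<forall>r v. sm (complex_of_real r) v = r *\<^sub>R v) \<and>
     (\<forall>a b v. sm (a * b) v = sm a (sm b v)) \<and>
     (\<forall>a b v. sm (a + b) v = sm a v + sm b v) \<and>
     (\<forall>a v w. sm a (v + w) = sm a v + sm a w) \<and>
     (\<forall>a v. norm (sm a v) = cmod a * norm v)"

definition star_normed_space ::
  "(complex \<Rightarrow> 'a::real_normed_vector \<Rightarrow> 'a) \<Rightarrow> ('a \<Rightarrow> 'a) \<Rightarrow> bool" where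
  "star_normed_space sm st \<longleftrightarrow>
     complex_normed_space sm \<and>
     (\<forall>v. st (st v) = v) \<and>
     (\<forall>v w. st (v + w) = st v + st w) \<and>
     (\<forall>a v. st (sm a v) = sm (cnj a) (st v)) \<and>
     (\<forall>v. norm (st v) = norm v)"

definition bounded_functional ::
  "(complex \<Rightarrow> 'a::real_normed_vector \<Rightarrow> 'a) \<Rightarrow> ('a \<Rightarrow> complex) \<Rightarrow> bool" where
  "bounded_functional sm \<phi> \<longleftrightarrow> bounded_linear \<phi> \<and> (\<forall>a v. \<phi> (sm a v) = a * \<phi> v)"

definition fstar :: "('a \<Rightarrow> 'a) \<Rightarrow> ('a \<Rightarrow> complex) \<Rightarrow> ('a \<Rightarrow> complex)" where
  "fstar st \<phi> = (\<lambda>v. cnj (\<phi> (st v)))"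

definition herm_functionals ::
  "(complex \<Rightarrow> 'a::real_normed_vector \<Rightarrow> 'a) \<Rightarrow> ('a \<Rightarrow> 'a) \<Rightarrow> ('a \<Rightarrow> complex) set" where
  "herm_functionals sm st = {\<phi>. bounded_functional sm \<phi> \<and> fstar st \<phi> = \<phi>}"

definition herm_e_functionals ::
  "(complex \<Rightarrow> 'a::real_normed_vector \<Rightarrow> 'a) \<Rightarrow> ('a \<Rightarrow> 'a) \<Rightarrow> 'a \<Rightarrow> ('a \<Rightarrow> complex) set" where
  "herm_e_functionals sm st e = {y \<in> herm_functionals sm st. y e = 1}"

definition unital_star_normed_space ::
  "(complex \<Rightarrow> 'a::real_normed_vector \<Rightarrow> 'a) \<Rightarrow> ('a \<Rightarrow> 'a) \<Rightarrow> 'a \<Rightarrow> bool" where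
  "unital_star_normed_space sm st e \<longleftrightarrow>
     star_normed_space sm st \<and> e \<noteq> 0 \<and> st e = e \<and>
     (\<exists>y \<in> herm_e_functionals sm st e. onorm y \<le> 1)"

definition S_eps ::
  "(complex \<Rightarrow> 'a::real_normed_vector \<Rightarrow> 'a) \<Rightarrow> ('a \<Rightarrow> 'a) \<Rightarrow> 'a \<Rightarrow> real \<Rightarrow> ('a \<Rightarrow> complex) set" where
  "S_eps sm st e \<epsilon> = {\<phi> \<in> herm_e_functionals sm st e. onorm \<phi> \<le> \<epsilon>}"

definition eps_norm ::
  "(complex \<Rightarrow> 'a::real_normed_vector \<Rightarrow> 'a) \<Rightarrow> ('a \<Rightarrow> 'a) \<Rightarrow> 'a \<Rightarrow> real \<Rightarrow> 'a \<Rightarrow> real" where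
  "eps_norm sm st e \<epsilon> v = Sup ((\<lambda>\<phi>. cmod (\<phi> v)) ` S_eps sm st e \<epsilon>)"

end

theory Submission
  imports Defs
begin

definition sublin :: "('a::real_normed_vector \<Rightarrow> real) \<Rightarrow> bool" where
  "sublin p \<longleftrightarrow> p 0 = 0 \<and> (\<forall>x y. p (x + y) \<le> p x + p y)
     \<and> (\<forall>c x. c > 0 \<longrightarrow> p (c *\<^sub>R x) \<le> c * p x)"

lemma sublin_lower: "sublin p \<Longrightarrow> - p (- x) \<le> p x"
proof -
  assume s: "sublin p"
  have "p (x + - x) \<le> p x + p (- x)" using s unfolding sublin_def by blast
  then show ?thesis using s unfolding sublin_def by simp
qed

lemma sublin_hom: assumes s: "sublin p" and c: "c \<ge> 0" shows "p (c *\<^sub>R x) = c * p x"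
proof (cases "c = 0")
  case True then show ?thesis using s unfolding sublin_def by simp
next
  case False
  then have c0: "c > 0" using c by simp
  have 1: "p (c *\<^sub>R x) \<le> c * p x" using s c0 unfolding sublin_def by blast
  have "p ((1/c) *\<^sub>R (c *\<^sub>R x)) \<le> (1/c) * p (c *\<^sub>R x)" using s c0 unfolding sublin_def
    by (meson divide_pos_pos zero_less_one)
  moreover have "(1/c) *\<^sub>R (c *\<^sub>R x) = x" using c0 by simp
  ultimately have "p x \<le> (1/c) * p (c *\<^sub>R x)" by simp
  then have "c * p x \<le> p (c *\<^sub>R x)" using c0 by (simp add: field_simps)
  with 1 show ?thesis by simp
qed

definition Dz :: "('a::real_normed_vector \<Rightarrow> real) \<Rightarrow> 'a \<Rightarrow> 'a \<Rightarrow> real" where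
  "Dz p z x = Inf ((\<lambda>t. p (x + t *\<^sub>R z) - t * p z) ` {0..})"

lemma D_lowerb: assumes s: "sublin p" and t: "t \<ge> 0"
  shows "- p (- x) \<le> p (x + t *\<^sub>R z) - t * p z"
proof -
  have "p (t *\<^sub>R z) = t * p z" using sublin_hom[OF s t] .
  moreover have "p ((x + t *\<^sub>R z) + - x) \<le> p (x + t *\<^sub>R z) + p (- x)" using s unfolding sublin_def by blast
  ultimately show ?thesis by simp
qed

lemma D_le: assumes s: "sublin p" and t: "t \<ge> 0"
  shows "Dz p z x \<le> p (x + t *\<^sub>R z) - t * p z"
  unfolding Dz_def
proof (rule cInf_lower)
  show "p (x + t *\<^sub>R z) - t * p z \<in> (\<lambda>t. p (x + t *\<^sub>R z) - t * p z) ` {0..}" using t by auto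
  show "bdd_below ((\<lambda>t. p (x + t *\<^sub>R z) - t * p z) ` {0..})"
    unfolding bdd_below_def using D_lowerb[OF s] by auto
qed

lemma D_ge: assumes "\<And>t. t \<ge> 0 \<Longrightarrow> m \<le> p (x + t *\<^sub>R z) - t * p z"
  shows "m \<le> Dz p z x"
  unfolding Dz_def by (rule cInf_greatest) (use assms in auto)

lemma D_below: "sublin p \<Longrightarrow> Dz p z x \<le> p x"
  using D_le[of p 0 z x] by simp

lemma D_neg: "sublin p \<Longrightarrow> Dz p z (- z) \<le> - p z"
  using D_le[of p 1 z "- z"] by (simp add: sublin_def)

lemma D_sublin: assumes s: "sublin p" shows "sublin (Dz p z)"
  unfolding sublin_def
proof (intro conjI allI impI)
  show "Dz p z 0 = 0"
  proof (rule antisym)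
    show "Dz p z 0 \<le> 0" using D_below[OF s, of z 0] s by (simp add: sublin_def)
    show "0 \<le> Dz p z 0" by (rule D_ge) (simp add: sublin_hom[OF s])
  qed
next
  fix x y
  have "Dz p z (x + y) - (p (y + t *\<^sub>R z) - t * p z) \<le> Dz p z x" if t: "t \<ge> 0" for t
  proof (rule D_ge)
    fix r :: real assume r: "r \<ge> 0"
    have "Dz p z (x + y) \<le> p ((x + y) + (r + t) *\<^sub>R z) - (r + t) * p z" using D_le[OF s] r t by simp
    also have "(x + y) + (r + t) *\<^sub>R z = (x + r *\<^sub>R z) + (y + t *\<^sub>R z)" by (simp add: algebra_simps)
    also have "p ((x + r *\<^sub>R z) + (y + t *\<^sub>R z)) \<le> p (x + r *\<^sub>R z) + p (y + t *\<^sub>R z)"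
      using s unfolding sublin_def by blast
    finally show "Dz p z (x + y) - (p (y + t *\<^sub>R z) - t * p z) \<le> p (x + r *\<^sub>R z) - r * p z"
      by (simp add: algebra_simps)
  qed
  then have "Dz p z (x + y) - Dz p z x \<le> Dz p z y"
    by (intro D_ge) (smt (verit))
  then show "Dz p z (x + y) \<le> Dz p z x + Dz p z y" by simp
next
  fix c :: real and x assume c: "c > 0"
  have "Dz p z (c *\<^sub>R x) / c \<le> Dz p z x"
  proof (rule D_ge)
    fix t :: real assume t: "t \<ge> 0"
    have "Dz p z (c *\<^sub>R x) \<le> p (c *\<^sub>R x + (c * t) *\<^sub>R z) - (c * t) * p z"
      using D_le[OF s] c t by simp
    also have "c *\<^sub>R x + (c * t) *\<^sub>R z = c *\<^sub>R (x + t *\<^sub>R z)" by (simp add: algebra_simps)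
    also have "p (c *\<^sub>R (x + t *\<^sub>R z)) = c * p (x + t *\<^sub>R z)" using sublin_hom[OF s] c by simp
    finally show "Dz p z (c *\<^sub>R x) / c \<le> p (x + t *\<^sub>R z) - t * p z"
      using c by (simp add: field_simps)
  qed
  then show "Dz p z (c *\<^sub>R x) \<le> c * Dz p z x" using c by (simp add: field_simps)
qed

lemma minimal_linear:
  assumes s: "sublin p" and m: "\<And>q. sublin q \<Longrightarrow> (\<forall>x. q x \<le> p x) \<Longrightarrow> q = p"
  shows "linear p"
proof -
  have neg: "p (- z) = - p z" for z
  proof -
    have "Dz p z = p" using m[OF D_sublin[OF s]] D_below[OF s] by blast
    then have "p (- z) \<le> - p z" using D_neg[OF s, of z] by simp
    moreover have "- p z \<le> p (- z)" using sublin_lower[OF s, of "- z"] by simp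
    ultimately show ?thesis by simp
  qed
  have add: "p (x + y) = p x + p y" for x y
  proof -
    have "p ((x + y) + - y) \<le> p (x + y) + p (- y)" using s unfolding sublin_def by blast
    then have "p x \<le> p (x + y) - p y" using neg by simp
    moreover have "p (x + y) \<le> p x + p y" using s unfolding sublin_def by blast
    ultimately show ?thesis by simp
  qed
  have sc: "p (c *\<^sub>R x) = c * p x" for c x
  proof (cases "c \<ge> 0")
    case True then show ?thesis using sublin_hom[OF s] by simp
  next
    case False
    then have "c *\<^sub>R x = - ((- c) *\<^sub>R x)" by simp
    then have "p (c *\<^sub>R x) = - p ((- c) *\<^sub>R x)" using neg by simp
    also have "\<dots> = c * p x" using sublin_hom[OF s, of "- c" x] False by simp
    finally show ?thesis .
  qed
  show ?thesis by (rule linearI) (simp_all add: add sc)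
qed

lemma sublin_norm: "sublin norm"
  unfolding sublin_def by (auto simp: norm_triangle_ineq)

lemma real_HB:
  fixes v :: "'a::real_normed_vector"
  shows "\<exists>f. linear f \<and> (\<forall>x. f x \<le> norm x) \<and> f v = norm v"
proof -
  define A where "A = {p::'a\<Rightarrow>real. sublin p \<and> (\<forall>x. p x \<le> norm x) \<and> p (- v) \<le> - norm v}"
  define P where "P = (\<lambda>(a::'a\<Rightarrow>real) b. \<forall>x. b x \<le> a x)"
  define q0 where "q0 = Dz norm v"
  have q0A: "q0 \<in> A" unfolding A_def q0_def
    using D_sublin[OF sublin_norm] D_below[OF sublin_norm] D_neg[OF sublin_norm] by auto
  have lowA: "- norm x \<le> p x" if "p \<in> A" for p x
  proof -
    have "sublin p" "p (- x) \<le> norm (- x)" using that unfolding A_def by blast+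
    then show ?thesis using sublin_lower[of p x] by simp
  qed
  have po: "partial_order_on A (relation_of P A)"
    unfolding partial_order_on_def preorder_on_def refl_on_def trans_on_def antisym_on_def relation_of_def P_def
    by (auto intro: order_trans antisym ext simp: fun_eq_iff)
  have ch: "\<exists>u \<in> A. \<forall>a \<in> C. P a u" if C: "C \<in> Chains (relation_of P A)" for C
  proof (cases "C = {}")
    case True then show ?thesis using q0A by auto
  next
    case False
    have CA: "C \<subseteq> A" using C unfolding Chains_def relation_of_def by auto
    have cmp: "P a b \<or> P b a" if "a \<in> C" "b \<in> C" for a b
      using C that unfolding Chains_def relation_of_def by auto
    define u where "u x = Inf ((\<lambda>p. p x) ` C)" for x
    have bdd: "bdd_below ((\<lambda>p. p x) ` C)" for x
      unfolding bdd_below_def using lowA CA by blast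
    have ule: "u x \<le> a x" if "a \<in> C" for a x
      unfolding u_def using that bdd by (intro cInf_lower) auto
    have uge: "m \<le> u x" if "\<And>a. a \<in> C \<Longrightarrow> m \<le> a x" for m x
      unfolding u_def using False that by (intro cInf_greatest) auto
    obtain a0 where a0: "a0 \<in> C" using False by auto
    have su: "sublin u" unfolding sublin_def
    proof (intro conjI allI impI)
      show "u 0 = 0"
      proof (rule antisym)
        show "u 0 \<le> 0" using ule[OF a0, of 0] CA a0 unfolding A_def sublin_def by auto
        show "0 \<le> u 0" by (rule uge) (use CA in \<open>auto simp: A_def sublin_def\<close>)
      qed
    next
      fix x y
      have "u (x + y) - b y \<le> u x" if b: "b \<in> C" for b
      proof (rule uge)
        fix a assume a: "a \<in> C"
        have "\<exists>m\<in>C. (\<forall>z. m z \<le> a z) \<and> (\<forall>z. m z \<le> b z)"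
          using cmp[OF a b] a b unfolding P_def by auto
        then obtain m where m: "m \<in> C" "\<And>z. m z \<le> a z" "\<And>z. m z \<le> b z" by blast
        have "u (x + y) \<le> m (x + y)" using ule[OF m(1)] .
        also have "\<dots> \<le> m x + m y" using m(1) CA unfolding A_def sublin_def by blast
        also have "\<dots> \<le> a x + b y" using m by (simp add: add_mono)
        finally show "u (x + y) - b y \<le> a x" by simp
      qed
      then have "u (x + y) - u x \<le> u y" by (intro uge) (smt (verit))
      then show "u (x + y) \<le> u x + u y" by simp
    next
      fix c :: real and x assume c: "c > 0"
      have "u (c *\<^sub>R x) / c \<le> u x"
      proof (rule uge)
        fix a assume a: "a \<in> C"
        have "u (c *\<^sub>R x) \<le> a (c *\<^sub>R x)" using ule[OF a] .
        also have "\<dots> \<le> c * a x" using a CA c unfolding A_def sublin_def by blast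
        finally show "u (c *\<^sub>R x) / c \<le> a x" using c by (simp add: field_simps)
      qed
      then show "u (c *\<^sub>R x) \<le> c * u x" using c by (simp add: field_simps)
    qed
    have a0A: "\<forall>x. a0 x \<le> norm x" "a0 (- v) \<le> - norm v" using CA a0 unfolding A_def by blast+
    have "u x \<le> norm x" for x using ule[OF a0, of x] a0A(1) by (meson order_trans)
    moreover have "u (- v) \<le> - norm v" using ule[OF a0, of "- v"] a0A(2) by linarith
    ultimately have "u \<in> A" using su unfolding A_def by blast
    moreover have "\<forall>a \<in> C. P a u" unfolding P_def using ule by blast
    ultimately show ?thesis by blast
  qed
  obtain m where mA: "m \<in> A" and mmin: "\<forall>a \<in> A. P m a \<longrightarrow> a = m"
    using predicate_Zorn[OF po ch] by blast
  have sm: "sublin m" using mA unfolding A_def by blast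
  have "linear m"
  proof (rule minimal_linear[OF sm])
    fix q assume q: "sublin q" "\<forall>x. q x \<le> m x"
    have "q \<in> A" using q mA unfolding A_def by (force intro: order_trans)
    then show "q = m" using mmin q unfolding P_def by blast
  qed
  moreover have "m x \<le> norm x" for x using mA unfolding A_def by blast
  moreover have "m v = norm v"
  proof -
    have "m (- v) = - m v" using \<open>linear m\<close> by (simp add: linear_neg)
    moreover have "m v \<le> norm v" "m (- v) \<le> - norm v" using mA unfolding A_def by blast+
    ultimately show ?thesis by linarith
  qed
  ultimately show ?thesis by blast
qed


lemma sm_real: "complex_normed_space sm \<Longrightarrow> sm (complex_of_real r) v = r *\<^sub>R v"
  unfolding complex_normed_space_def by blast
lemma sm_mult: "complex_normed_space sm \<Longrightarrow> sm (a * b) v = sm a (sm b v)"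
  unfolding complex_normed_space_def by blast
lemma sm_adds: "complex_normed_space sm \<Longrightarrow> sm (a + b) v = sm a v + sm b v"
  unfolding complex_normed_space_def by blast
lemma sm_addv: "complex_normed_space sm \<Longrightarrow> sm a (v + w) = sm a v + sm a w"
  unfolding complex_normed_space_def by blast
lemma sm_norm: "complex_normed_space sm \<Longrightarrow> norm (sm a v) = cmod a * norm v"
  unfolding complex_normed_space_def by blast

lemma sm_scaleR: assumes c: "complex_normed_space sm"
  shows "sm a (r *\<^sub>R x) = r *\<^sub>R sm a x"
proof -
  have "sm a (r *\<^sub>R x) = sm a (sm (complex_of_real r) x)" using sm_real[OF c] by simp
  also have "\<dots> = sm (complex_of_real r * a) x" using sm_mult[OF c] by (simp add: mult.commute)
  also have "\<dots> = r *\<^sub>R sm a x" using sm_mult[OF c] sm_real[OF c] by simp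
  finally show ?thesis .
qed

lemma sm_decomp: assumes c: "complex_normed_space sm"
  shows "sm a x = Re a *\<^sub>R x + Im a *\<^sub>R sm \<i> x"
proof -
  have "sm a x = sm (complex_of_real (Re a) + complex_of_real (Im a) * \<i>) x"
    by (metis complex_eq mult.commute)
  also have "\<dots> = Re a *\<^sub>R x + Im a *\<^sub>R sm \<i> x"
    using sm_adds[OF c] sm_mult[OF c] sm_real[OF c] by simp
  finally show ?thesis .
qed

lemma sm_ii: assumes c: "complex_normed_space sm" shows "sm \<i> (sm \<i> x) = - x"
proof -
  have "sm \<i> (sm \<i> x) = sm (complex_of_real (-1)) x" using sm_mult[OF c, of \<i> \<i> x] by simp
  also have "\<dots> = - x" using sm_real[OF c, of "-1" x] by simp
  finally show ?thesis .
qed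

lemma complex_HB:
  fixes sm :: "complex \<Rightarrow> 'a::real_normed_vector \<Rightarrow> 'a"
  assumes c: "complex_normed_space sm"
  shows "\<exists>\<phi>. bounded_functional sm \<phi> \<and> (\<forall>x. cmod (\<phi> x) \<le> norm x) \<and> Re (\<phi> v) = norm v"
proof -
  obtain f where lf: "linear f" and fle: "\<And>x. f x \<le> norm x" and fv: "f v = norm v"
    using real_HB[of v] by blast
  define \<phi> where "\<phi> x = complex_of_real (f x) - \<i> * complex_of_real (f (sm \<i> x))" for x
  have fadd: "f (x + y) = f x + f y" for x y using lf by (simp add: linear_add)
  have fsc: "f (r *\<^sub>R x) = r * f x" for r x using lf by (simp add: linear_scale)
  have fneg: "f (- x) = - f x" for x using lf by (simp add: linear_neg)
  have padd: "\<phi> (x + y) = \<phi> x + \<phi> y" for x y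
    unfolding \<phi>_def using fadd sm_addv[OF c] by (simp add: algebra_simps)
  have psc: "\<phi> (r *\<^sub>R x) = r *\<^sub>R \<phi> x" for r x
    unfolding \<phi>_def using fsc sm_scaleR[OF c] by (simp add: algebra_simps scaleR_conv_of_real)
  have pii: "\<phi> (sm \<i> x) = \<i> * \<phi> x" for x
    unfolding \<phi>_def using sm_ii[OF c] fneg by (simp add: algebra_simps)
  have phom: "\<phi> (sm a x) = a * \<phi> x" for a x
  proof -
    have "\<phi> (sm a x) = Re a *\<^sub>R \<phi> x + Im a *\<^sub>R (\<i> * \<phi> x)"
      using sm_decomp[OF c, of a x] padd psc pii by simp
    also have "\<dots> = (complex_of_real (Re a) + \<i> * complex_of_real (Im a)) * \<phi> x"
      by (simp add: scaleR_conv_of_real algebra_simps)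
    also have "\<dots> = a * \<phi> x" using complex_eq[of a] by simp
    finally show ?thesis .
  qed
  have pre: "Re (\<phi> x) = f x" for x unfolding \<phi>_def by simp
  have pb: "cmod (\<phi> x) \<le> norm x" for x
  proof (cases "\<phi> x = 0")
    case True then show ?thesis by simp
  next
    case False
    define w where "w = \<phi> x"
    define u where "u = cnj w / complex_of_real (cmod w)"
    have wpos: "cmod w > 0" using False w_def by simp
    have cu: "cmod u = 1" unfolding u_def using wpos by (simp add: norm_divide)
    have "u * w = complex_of_real ((cmod w)^2) / complex_of_real (cmod w)"
      unfolding u_def complex_norm_square by (simp add: mult.commute)
    also have "\<dots> = complex_of_real (cmod w)" using wpos by (simp add: power2_eq_square)
    finally have uw: "u * w = complex_of_real (cmod w)" .
    have "cmod w = Re (\<phi> (sm u x))" using phom[of u x] uw w_def by simp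
    also have "\<dots> = f (sm u x)" by (rule pre)
    also have "\<dots> \<le> norm (sm u x)" by (rule fle)
    also have "\<dots> = norm x" using sm_norm[OF c] cu by simp
    finally show ?thesis using w_def by simp
  qed
  have "bounded_linear \<phi>"
    by (rule bounded_linear_intro[where K=1]) (use padd psc pb in auto)
  then have "bounded_functional sm \<phi>" unfolding bounded_functional_def using phom by blast
  moreover have "Re (\<phi> v) = norm v" using pre fv by simp
  ultimately show ?thesis using pb by blast
qed


lemma st_scaleR: assumes s: "star_normed_space sm st" shows "st (r *\<^sub>R x) = r *\<^sub>R st x"
proof -
  have c: "complex_normed_space sm" using s unfolding star_normed_space_def by blast
  have "st (r *\<^sub>R x) = st (sm (complex_of_real r) x)" using sm_real[OF c] by simp
  also have "\<dots> = sm (complex_of_real r) (st x)" using s unfolding star_normed_space_def by simp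
  also have "\<dots> = r *\<^sub>R st x" using sm_real[OF c] by simp
  finally show ?thesis .
qed

lemma herm_part:
  assumes s: "star_normed_space sm st" and bf: "bounded_functional sm \<phi>"
    and pb: "\<And>x. cmod (\<phi> x) \<le> norm x" and al: "cmod \<alpha> = 1/2"
  shows "(\<lambda>x. \<alpha> * \<phi> x + cnj \<alpha> * cnj (\<phi> (st x))) \<in> herm_functionals sm st
    \<and> (\<forall>x. cmod (\<alpha> * \<phi> x + cnj \<alpha> * cnj (\<phi> (st x))) \<le> norm x)"
proof -
  define \<psi> where "\<psi> x = \<alpha> * \<phi> x + cnj \<alpha> * cnj (\<phi> (st x))" for x
  have bl: "bounded_linear \<phi>" and hom: "\<And>a x. \<phi> (sm a x) = a * \<phi> x"
    using bf unfolding bounded_functional_def by blast+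
  have stadd: "st (x + y) = st x + st y" for x y using s unfolding star_normed_space_def by blast
  have stst: "st (st x) = x" for x using s unfolding star_normed_space_def by blast
  have stn: "norm (st x) = norm x" for x using s unfolding star_normed_space_def by blast
  have stsm: "st (sm a x) = sm (cnj a) (st x)" for a x using s unfolding star_normed_space_def by blast
  have padd: "\<phi> (x + y) = \<phi> x + \<phi> y" for x y using bl by (simp add: linear_simps)
  have psc: "\<phi> (r *\<^sub>R x) = r *\<^sub>R \<phi> x" for r x using bl by (simp add: linear_simps)
  have qb: "cmod (\<psi> x) \<le> norm x" for x
  proof -
    have "cmod (\<psi> x) \<le> cmod (\<alpha> * \<phi> x) + cmod (cnj \<alpha> * cnj (\<phi> (st x)))"
      unfolding \<psi>_def by (rule norm_triangle_ineq)
    also have "\<dots> = (1/2) * cmod (\<phi> x) + (1/2) * cmod (\<phi> (st x))"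
      by (simp add: norm_mult al)
    also have "\<dots> \<le> (1/2) * norm x + (1/2) * norm (st x)" using pb[of x] pb[of "st x"] by simp
    finally show ?thesis using stn by simp
  qed
  have qadd: "\<psi> (x + y) = \<psi> x + \<psi> y" for x y
    unfolding \<psi>_def using padd stadd by (simp add: algebra_simps)
  have qsc: "\<psi> (r *\<^sub>R x) = r *\<^sub>R \<psi> x" for r x
    unfolding \<psi>_def using psc st_scaleR[OF s] by (simp add: algebra_simps scaleR_conv_of_real)
  have "bounded_linear \<psi>"
    by (rule bounded_linear_intro[where K=1]) (use qadd qsc qb in auto)
  moreover have "\<psi> (sm a x) = a * \<psi> x" for a x
    unfolding \<psi>_def using hom stsm by (simp add: algebra_simps)
  moreover have "fstar st \<psi> = \<psi>"
    unfolding fstar_def \<psi>_def using stst by (simp add: algebra_simps)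
  ultimately have "\<psi> \<in> herm_functionals sm st"
    unfolding herm_functionals_def bounded_functional_def by blast
  then show ?thesis using qb unfolding \<psi>_def by blast
qed

lemma herm_lin:
  assumes h: "h \<in> herm_functionals sm st" and k: "k \<in> herm_functionals sm st"
  shows "(\<lambda>x. complex_of_real a * h x + complex_of_real b * k x) \<in> herm_functionals sm st"
proof -
  have "bounded_linear h" "bounded_linear k" "\<And>c x. h (sm c x) = c * h x" "\<And>c x. k (sm c x) = c * k x"
    "fstar st h = h" "fstar st k = k"
    using h k unfolding herm_functionals_def bounded_functional_def by blast+
  moreover have "bounded_linear (\<lambda>x. complex_of_real a * h x + complex_of_real b * k x)"
    using calculation(1,2) by (intro bounded_linear_add bounded_linear_compose[OF bounded_linear_mult_right])
  ultimately show ?thesis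
    unfolding herm_functionals_def bounded_functional_def fstar_def
    by (auto simp: algebra_simps fun_eq_iff dest: fun_cong)
qed

theorem corollary4p4:
  fixes sm :: "complex \<Rightarrow> 'a::real_normed_vector \<Rightarrow> 'a"
    and st :: "'a \<Rightarrow> 'a" and e :: 'a and \<epsilon> :: real
  assumes "unital_star_normed_space sm st e"
    and "\<epsilon> > 1 / norm e"
  shows "(\<forall>v. eps_norm sm st e \<epsilon> v = 0 \<longleftrightarrow> v = 0)
    \<and> (\<forall>v w. eps_norm sm st e \<epsilon> (v + w) \<le> eps_norm sm st e \<epsilon> v + eps_norm sm st e \<epsilon> w)
    \<and> (\<forall>a v. eps_norm sm st e \<epsilon> (sm a v) = cmod a * eps_norm sm st e \<epsilon> v)
    \<and> (\<exists>c C. 0 < c \<and> 0 < C \<and>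
         (\<forall>v. c * norm v \<le> eps_norm sm st e \<epsilon> v \<and> eps_norm sm st e \<epsilon> v \<le> C * norm v))"
proof -
  define N where "N = eps_norm sm st e \<epsilon>"
  define S where "S = S_eps sm st e \<epsilon>"
  have s: "star_normed_space sm st" and e0: "e \<noteq> 0" and ste: "st e = e"
    using assms(1) unfolding unital_star_normed_space_def by blast+
  have c: "complex_normed_space sm" using s unfolding star_normed_space_def by blast
  have ne: "norm e > 0" using e0 by simp
  have epos: "\<epsilon> > 0" using assms(2) ne by (meson divide_pos_pos less_trans zero_less_one)
  have Ndef: "N v = Sup ((\<lambda>\<phi>. cmod (\<phi> v)) ` S)" for v unfolding N_def S_def eps_norm_def by simp
  have Sdef: "S = {\<phi> \<in> herm_functionals sm st. \<phi> e = 1 \<and> onorm \<phi> \<le> \<epsilon>}"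
    unfolding S_def S_eps_def herm_e_functionals_def by auto
  have hbl: "bounded_linear h" "\<And>a x. h (sm a x) = a * h x" "fstar st h = h"
    if "h \<in> herm_functionals sm st" for h
    using that unfolding herm_functionals_def bounded_functional_def by blast+
  have Sin: "\<phi> \<in> S" if "\<phi> \<in> herm_functionals sm st" "\<phi> e = 1" "\<And>x. cmod (\<phi> x) \<le> \<epsilon> * norm x" for \<phi>
  proof -
    have "onorm \<phi> \<le> \<epsilon>" using that(3) epos by (intro onorm_bound) auto
    then show ?thesis using that unfolding Sdef by blast
  qed
  have Sb: "cmod (\<phi> x) \<le> \<epsilon> * norm x" if "\<phi> \<in> S" for \<phi> x
  proof -
    have "cmod (\<phi> x) \<le> onorm \<phi> * norm x" using onorm hbl(1) that unfolding Sdef by blast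
    also have "\<dots> \<le> \<epsilon> * norm x" using that unfolding Sdef by (auto intro: mult_right_mono)
    finally show ?thesis .
  qed
  obtain \<phi>0 where bf0: "bounded_functional sm \<phi>0" and pb0: "\<And>x. cmod (\<phi>0 x) \<le> norm x"
    and re0: "Re (\<phi>0 e) = norm e" using complex_HB[OF c, of e] by blast
  define h1 where "h1 x = (1/2) * \<phi>0 x + cnj (1/2) * cnj (\<phi>0 (st x))" for x
  have h1: "h1 \<in> herm_functionals sm st" "\<And>x. cmod (h1 x) \<le> norm x"
    using herm_part[OF s bf0 pb0, of "1/2"] unfolding h1_def[abs_def] by auto
  have h1e: "h1 e = complex_of_real (norm e)"
    unfolding h1_def ste using re0 by (simp add: complex_eq_iff)
  define h0 where "h0 x = complex_of_real (1 / norm e) * h1 x + complex_of_real 0 * h1 x" for x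
  have h0H: "h0 \<in> herm_functionals sm st" unfolding h0_def[abs_def] by (rule herm_lin[OF h1(1) h1(1)])
  have h0e: "h0 e = 1" unfolding h0_def h1e using ne by simp
  have h0b: "cmod (h0 x) \<le> (1 / norm e) * norm x" for x
    unfolding h0_def using h1(2)[of x] ne by (simp add: norm_divide divide_right_mono)
  have h0S: "h0 \<in> S"
  proof (rule Sin[OF h0H h0e])
    fix x show "cmod (h0 x) \<le> \<epsilon> * norm x"
    proof -
      have "(1 / norm e) * norm x \<le> \<epsilon> * norm x" using assms(2) by (intro mult_right_mono) auto
      then show ?thesis using h0b[of x] by linarith
    qed
  qed
  have Sne: "S \<noteq> {}" using h0S by blast
  have bdd: "bdd_above ((\<lambda>\<phi>. cmod (\<phi> v)) ` S)" for v
    unfolding bdd_above_def using Sb by blast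
  have Nup: "cmod (\<phi> v) \<le> N v" if "\<phi> \<in> S" for \<phi> v
    unfolding Ndef using that bdd by (intro cSup_upper) auto
  have Nleast: "N v \<le> M" if "\<And>\<phi>. \<phi> \<in> S \<Longrightarrow> cmod (\<phi> v) \<le> M" for v M
    unfolding Ndef using that Sne by (intro cSup_least) auto
  have Nnn: "0 \<le> N v" for v using Nup[OF h0S, of v] norm_ge_zero[of "h0 v"] by linarith
  have Nupper: "N v \<le> \<epsilon> * norm v" for v using Sb by (intro Nleast) auto
  define t where "t = (\<epsilon> - 1 / norm e) / 2"
  have tpos: "t > 0" unfolding t_def using assms(2) by simp
  define K where "K = (2 + t * norm e) / t"
  have Kpos: "K > 0" unfolding K_def using tpos ne
    by (intro divide_pos_pos add_pos_nonneg) auto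
  have hctrl: "cmod (h v) \<le> K * N v"
    if hH: "h \<in> herm_functionals sm st" and hb: "\<And>x. cmod (h x) \<le> norm x" for h v
  proof -
    define r where "r = Re (h e)"
    have "cnj (h e) = h e" using fun_cong[OF hbl(3)[OF hH], of e] ste unfolding fstar_def by simp
    then have her: "h e = complex_of_real r" unfolding r_def by (simp add: complex_eq_iff)
    have rb: "\<bar>r\<bar> \<le> norm e" using hb[of e] her by simp
    define g where "g x = complex_of_real (1 - t * r) * h0 x + complex_of_real t * h x" for x
    have gH: "g \<in> herm_functionals sm st" unfolding g_def[abs_def] by (rule herm_lin[OF h0H hH])
    have ge: "g e = 1" unfolding g_def h0e her by simp
    have a1: "\<bar>1 - t * r\<bar> \<le> 1 + t * norm e"
    proof -
      have "\<bar>t * r\<bar> \<le> t * norm e" using rb tpos by (simp add: abs_mult mult_left_mono)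
      then show ?thesis by linarith
    qed
    have gb: "cmod (g x) \<le> \<epsilon> * norm x" for x
    proof -
      have "cmod (g x) \<le> \<bar>1 - t * r\<bar> * cmod (h0 x) + t * cmod (h x)"
      proof -
        have nn: "cmod (1 - complex_of_real t * complex_of_real r) = \<bar>1 - t * r\<bar>"
          by (metis norm_of_real of_real_1 of_real_diff of_real_mult)
        show ?thesis
          unfolding g_def using tpos norm_triangle_ineq[of "complex_of_real (1 - t * r) * h0 x" "complex_of_real t * h x"]
          by (simp add: norm_mult nn)
      qed
      also have "\<dots> \<le> (1 + t * norm e) * ((1 / norm e) * norm x) + t * norm x"
        using a1 h0b[of x] hb[of x] tpos
        by (intro add_mono mult_mono mult_left_mono) auto
      also have "\<dots> = (1 / norm e + 2 * t) * norm x" using ne by (simp add: field_simps)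
      also have "\<dots> = \<epsilon> * norm x" unfolding t_def by (simp add: field_simps)
      finally show ?thesis .
    qed
    have gS: "g \<in> S" by (rule Sin[OF gH ge gb])
    have "complex_of_real t * h v = g v - complex_of_real (1 - t * r) * h0 v" unfolding g_def by simp
    then have "t * cmod (h v) = cmod (g v - complex_of_real (1 - t * r) * h0 v)"
      using tpos by (metis abs_of_pos norm_mult norm_of_real)
    also have "\<dots> \<le> cmod (g v) + \<bar>1 - t * r\<bar> * cmod (h0 v)"
      by (metis norm_mult norm_of_real norm_triangle_ineq4)
    also have "\<dots> \<le> N v + (1 + t * norm e) * N v"
      using Nup[OF gS, of v] Nup[OF h0S, of v] a1 Nnn[of v]
      by (intro add_mono mult_mono) auto
    also have "\<dots> = t * (K * N v)" unfolding K_def using tpos by (simp add: field_simps)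
    finally show ?thesis using tpos by simp
  qed
  have Nlower: "(1 / (2 * K)) * norm v \<le> N v" for v
  proof -
    obtain \<phi> where bf: "bounded_functional sm \<phi>" and pb: "\<And>x. cmod (\<phi> x) \<le> norm x"
      and rev: "Re (\<phi> v) = norm v" using complex_HB[OF c, of v] by blast
    define h where "h x = (1/2) * \<phi> x + cnj (1/2) * cnj (\<phi> (st x))" for x
    define k where "k x = (- \<i>/2) * \<phi> x + cnj (- \<i>/2) * cnj (\<phi> (st x))" for x
    have h: "h \<in> herm_functionals sm st" "\<And>x. cmod (h x) \<le> norm x"
      using herm_part[OF s bf pb, of "1/2"] unfolding h_def[abs_def] by auto
    have k: "k \<in> herm_functionals sm st" "\<And>x. cmod (k x) \<le> norm x"
      using herm_part[OF s bf pb, of "- \<i>/2"] unfolding k_def[abs_def] by (auto simp: norm_divide)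
    have "\<phi> v = h v + \<i> * k v" unfolding h_def k_def by (simp add: algebra_simps)
    then have "norm v \<le> cmod (h v) + cmod (k v)"
      using rev abs_Re_le_cmod[of "\<phi> v"] norm_triangle_ineq[of "h v" "\<i> * k v"]
      by (simp add: norm_mult)
    also have "\<dots> \<le> K * N v + K * N v" using hctrl[OF h] hctrl[OF k] by (rule add_mono)
    finally show ?thesis using Kpos by (simp add: field_simps)
  qed
  have P1: "\<forall>v. N v = 0 \<longleftrightarrow> v = 0"
  proof (intro allI iffI)
    fix v assume "N v = 0"
    then have "(1 / (2 * K)) * norm v \<le> 0" using Nlower[of v] by simp
    then have "norm v \<le> 0" using Kpos by (simp add: divide_le_0_iff)
    then show "v = 0" by simp
  next
    fix v :: 'a assume "v = 0"
    then show "N v = 0" using Nupper[of v] Nnn[of v] by simp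
  qed
  have P2: "\<forall>v w. N (v + w) \<le> N v + N w"
  proof (intro allI)
    fix v w
    show "N (v + w) \<le> N v + N w"
    proof (rule Nleast)
      fix \<phi> assume p: "\<phi> \<in> S"
      have "\<phi> (v + w) = \<phi> v + \<phi> w" using hbl(1) p unfolding Sdef by (simp add: linear_simps)
      then have "cmod (\<phi> (v + w)) \<le> cmod (\<phi> v) + cmod (\<phi> w)" by (simp add: norm_triangle_ineq)
      then show "cmod (\<phi> (v + w)) \<le> N v + N w" using Nup[OF p, of v] Nup[OF p, of w] by simp
    qed
  qed
  have P3: "\<forall>a v. N (sm a v) = cmod a * N v"
  proof (intro allI)
    fix a v
    have hom: "\<phi> (sm a x) = a * \<phi> x" if "\<phi> \<in> S" for \<phi> x using hbl(2) that unfolding Sdef by blast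
    show "N (sm a v) = cmod a * N v"
    proof (cases "a = 0")
      case True
      have "sm a v = 0" using True sm_real[OF c, of 0 v] by simp
      then show ?thesis using True P1 by simp
    next
      case False
      have le: "N (sm a v) \<le> cmod a * N v"
        by (rule Nleast) (simp add: hom norm_mult Nup mult_left_mono)
      have "N v \<le> N (sm a v) / cmod a"
      proof (rule Nleast)
        fix \<phi> assume p: "\<phi> \<in> S"
        have "cmod (\<phi> (sm a v)) = cmod a * cmod (\<phi> v)" using hom[OF p] by (simp add: norm_mult)
        then show "cmod (\<phi> v) \<le> N (sm a v) / cmod a"
          using Nup[OF p, of "sm a v"] False by (simp add: field_simps)
      qed
      then have "cmod a * N v \<le> N (sm a v)" using False by (simp add: field_simps)
      with le show ?thesis by simp
    qed
  qed
  have P4: "\<exists>c C. 0 < c \<and> 0 < C \<and> (\<forall>v. c * norm v \<le> N v \<and> N v \<le> C * norm v)"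
    using Nlower Nupper Kpos epos by (intro exI[of _ "1 / (2 * K)"] exI[of _ \<epsilon>]) auto
  show ?thesis using P1 P2 P3 P4 unfolding N_def by blast
qed

end
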